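(* Let $E,F$ be Banach spaces over $\mathbb{K}$ and $m,n,k\in\mathbb{N}$. If either $k=n=1$, or $kn$ is odd and $\mathbb{K}=\mathbb{R}$, then the map $P\in\mathcal{P}(^mE;F)\mapsto\Delta^n_kP\in\mathcal{P}(^n\mathcal{P}(^kF);\mathcal{P}(^{mkn}E))$ is injective.
   Context: Banach spaces are over $\mathbb{K}=\mathbb{R}$ or $\mathbb{C}$. $\mathcal{P}(^jX;Y)$ is the space of continuous $j$-homogeneous polynomials $X\to Y$, $\mathcal{P}(^jX)=\mathcal{P}(^jX;\mathbb{K})$. For $P\in\mathcal{P}(^mE;F)$, $\Delta^n_kP\colon\mathcal{P}(^kF)\to\mathcal{P}(^{mnk}E)$ is defined by $\Delta^n_kP(q)(x)=q(P(x))^n$. *)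

theory Defs
  imports "HOL-Analysis.Analysis"
begin

text \<open>A real Banach space is a type of class banach with scaleR.
A complex Banach space is a real Banach space together with a complex scalar
multiplication extending scaleR and making the norm complex-absolutely homogeneous.\<close>

definition complex_structure :: "(complex \<Rightarrow> 'a::real_normed_vector \<Rightarrow> 'a) \<Rightarrow> bool" where
  "complex_structure sc \<longleftrightarrow>
     (\<forall>r x. sc (complex_of_real r) x = r *\<^sub>R x) \<and>
     (\<forall>a b x. sc (a * b) x = sc a (sc b x)) \<and>
     (\<forall>a x y. sc a (x + y) = sc a x + sc a y) \<and>
     (\<forall>a b x. sc (a + b) x = sc a x + sc b x) \<and>
     (\<forall>a x. norm (sc a x) = cmod a * norm x)"

text \<open>j-linear maps X^j \<rightarrow> Y over the scalars 'k acting via scX, scY.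
Elements of X^j are represented as functions nat \<Rightarrow> X, only coordinates < j matter.\<close>

definition multilinear_map ::
  "('k \<Rightarrow> 'a \<Rightarrow> 'a) \<Rightarrow> ('k \<Rightarrow> 'b \<Rightarrow> 'b) \<Rightarrow> nat \<Rightarrow> ((nat \<Rightarrow> 'a::ab_group_add) \<Rightarrow> 'b::ab_group_add) \<Rightarrow> bool" where
  "multilinear_map scX scY j A \<longleftrightarrow>
     (\<forall>x y. (\<forall>i<j. x i = y i) \<longrightarrow> A x = A y) \<and>
     (\<forall>i<j. \<forall>x.
        (\<forall>y z. A (x(i := y + z)) = A (x(i := y)) + A (x(i := z))) \<and>
        (\<forall>c y. A (x(i := scX c y)) = scY c (A (x(i := y)))))"

definition hom_poly ::
  "('k \<Rightarrow> 'a \<Rightarrow> 'a) \<Rightarrow> ('k \<Rightarrow> 'b \<Rightarrow> 'b) \<Rightarrow> nat \<Rightarrow> ('a::real_normed_vector \<Rightarrow> 'b::real_normed_vector) \<Rightarrow> bool" where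
  "hom_poly scX scY j P \<longleftrightarrow>
     (\<exists>A. multilinear_map scX scY j A \<and> continuous_on UNIV A \<and> (\<forall>x. P x = A (\<lambda>_. x)))"

definition Delta ::
  "('b \<Rightarrow> 'k) set \<Rightarrow> nat \<Rightarrow> ('a \<Rightarrow> 'b) \<Rightarrow> ('b \<Rightarrow> 'k) \<Rightarrow> ('a \<Rightarrow> 'k::monoid_mult)" where
  "Delta Q n P = (\<lambda>q\<in>Q. \<lambda>x. (q (P x)) ^ n)"

end

theory Submission imports Defs begin

definition LG :: "'b::real_normed_vector \<Rightarrow> ('b \<times> real) set \<Rightarrow> bool" where
  "LG y G \<longleftrightarrow> (\<forall>p\<in>G. \<forall>q\<in>G. p + q \<in> G) \<and> (\<forall>p\<in>G. \<forall>r. r *\<^sub>R p \<in> G)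
     \<and> (\<forall>x a b. (x,a)\<in>G \<longrightarrow> (x,b)\<in>G \<longrightarrow> a = b) \<and> (\<forall>x a. (x,a)\<in>G \<longrightarrow> a \<le> norm x)
     \<and> (y, norm y) \<in> G"

lemma LG_zero: "LG y G \<Longrightarrow> (0,0) \<in> G"
  unfolding LG_def by (metis scaleR_zero_left zero_prod_def)

lemma LG_extend:
  fixes y z :: "'b::real_normed_vector"
  assumes LG: "LG y M" and z: "z \<notin> fst ` M"
  shows "\<exists>M'. LG y M' \<and> M \<subseteq> M' \<and> M' \<noteq> M"
proof -
  have add: "\<And>p q. p\<in>M \<Longrightarrow> q\<in>M \<Longrightarrow> p + q \<in> M" and sc: "\<And>p r. p\<in>M \<Longrightarrow> r *\<^sub>R p \<in> M"
    and funq: "\<And>x a b. (x,a)\<in>M \<Longrightarrow> (x,b)\<in>M \<Longrightarrow> a = b"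
    and bd: "\<And>x a. (x,a)\<in>M \<Longrightarrow> a \<le> norm x" and yM: "(y, norm y) \<in> M"
    using LG unfolding LG_def by blast+
  have M0: "(0,0) \<in> M" using LG_zero[OF LG] .
  have key: "a - norm (u - z) \<le> norm (v + z) - b" if "(u,a)\<in>M" "(v,b)\<in>M" for u a v b
  proof -
    have "(u+v, a+b) \<in> M" using add[OF that] by simp
    hence "a + b \<le> norm (u+v)" by (rule bd)
    also have "norm (u+v) \<le> norm (u - z) + norm (v + z)"
      using norm_triangle_ineq[of "u - z" "v + z"] by simp
    finally show ?thesis by simp
  qed
  define S where "S = {a - norm (u - z) | u a. (u,a)\<in>M}"
  define c where "c = Sup S"
  have Sne: "S \<noteq> {}" using M0 unfolding S_def by blast
  have Sbdd: "bdd_above S" unfolding S_def bdd_above_def using key[OF _ M0] by auto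
  have c_up: "a - norm (u - z) \<le> c" if "(u,a)\<in>M" for u a
    unfolding c_def by (rule cSup_upper[OF _ Sbdd]) (use that S_def in blast)
  have c_lo: "c \<le> norm (v + z) - b" if "(v,b)\<in>M" for v b
    unfolding c_def by (rule cSup_least[OF Sne]) (use key that S_def in blast)
  define M' where "M' = {(x + t *\<^sub>R z, a + t * c) | x a t. (x,a)\<in>M}"
  have sub: "M \<subseteq> M'"
  proof
    fix p assume "p \<in> M"
    then show "p \<in> M'" unfolding M'_def by (cases p) force
  qed
  have zin: "(z, c) \<in> M'" unfolding M'_def using M0 by force
  have znot: "(z, c) \<notin> M" using z by force
  have "LG y M'"
    unfolding LG_def
  proof (intro conjI ballI allI impI)
    fix p q assume "p \<in> M'" "q \<in> M'"
    then obtain x a t x' a' t' where p: "p = (x + t *\<^sub>R z, a + t * c)" "(x,a)\<in>M"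
      and q: "q = (x' + t' *\<^sub>R z, a' + t' * c)" "(x',a')\<in>M"
      unfolding M'_def by blast
    have "(x + x', a + a') \<in> M" using add[OF p(2) q(2)] by simp
    moreover have "p + q = ((x + x') + (t + t') *\<^sub>R z, (a + a') + (t + t') * c)"
      using p q by (simp add: algebra_simps scaleR_add_left)
    ultimately show "p + q \<in> M'" unfolding M'_def by blast
  next
    fix p r assume "p \<in> M'"
    then obtain x a t where p: "p = (x + t *\<^sub>R z, a + t * c)" "(x,a)\<in>M"
      unfolding M'_def by blast
    have "(r *\<^sub>R x, r * a) \<in> M" using sc[OF p(2), of r] by simp
    moreover have "r *\<^sub>R p = (r *\<^sub>R x + (r * t) *\<^sub>R z, r * a + (r * t) * c)"
      using p by (simp add: algebra_simps)
    ultimately show "r *\<^sub>R p \<in> M'" unfolding M'_def by blast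
  next
    fix w a b assume "(w, a) \<in> M'" "(w, b) \<in> M'"
    then obtain x a0 t x' a0' t' where p: "w = x + t *\<^sub>R z" "a = a0 + t * c" "(x,a0)\<in>M"
      and q: "w = x' + t' *\<^sub>R z" "b = a0' + t' * c" "(x',a0')\<in>M"
      unfolding M'_def by blast
    have tt: "t = t'"
    proof (rule ccontr)
      assume ne: "t \<noteq> t'"
      have "(inverse (t - t')) *\<^sub>R ((x', a0') + (-1) *\<^sub>R (x, a0)) \<in> M"
        using sc add p(3) q(3) by blast
      moreover have "fst ((inverse (t - t')) *\<^sub>R ((x', a0') + (-1) *\<^sub>R (x, a0))) = z"
      proof -
        have "(t - t') *\<^sub>R z = x' - x" using p(1) q(1) by (simp add: algebra_simps)
        hence "inverse (t - t') *\<^sub>R (x' - x) = z" using ne by (metis divideR_right right_minus_eq)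
        thus ?thesis by simp
      qed
      ultimately show False using z by force
    qed
    hence "x = x'" using p(1) q(1) by simp
    thus "a = b" using funq p q tt by blast
  next
    fix w a assume "(w, a) \<in> M'"
    then obtain x a0 t where p: "w = x + t *\<^sub>R z" "a = a0 + t * c" "(x,a0)\<in>M"
      unfolding M'_def by blast
    show "a \<le> norm w"
    proof (cases t "0::real" rule: linorder_cases)
      case equal thus ?thesis using p bd by simp
    next
      case greater
      have m: "(inverse t *\<^sub>R x, inverse t * a0) \<in> M" using sc[OF p(3)] by simp
      have "c \<le> norm (inverse t *\<^sub>R x + z) - inverse t * a0" by (rule c_lo[OF m])
      hence "t * c \<le> t * (norm (inverse t *\<^sub>R x + z) - inverse t * a0)"
        using greater by (simp add: mult_left_mono)
      also have "\<dots> = norm (t *\<^sub>R (inverse t *\<^sub>R x + z)) - a0"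
        using greater by (simp add: right_diff_distrib)
      also have "t *\<^sub>R (inverse t *\<^sub>R x + z) = w" using greater p(1) by (simp add: algebra_simps)
      finally show ?thesis using p(2) by simp
    next
      case less
      define s where "s = - t"
      have s: "s > 0" using less s_def by simp
      have m: "(inverse s *\<^sub>R x, inverse s * a0) \<in> M" using sc[OF p(3)] by simp
      have "inverse s * a0 - norm (inverse s *\<^sub>R x - z) \<le> c" by (rule c_up[OF m])
      hence "s * (inverse s * a0 - norm (inverse s *\<^sub>R x - z)) \<le> s * c"
        using s by (simp add: mult_left_mono)
      hence "a0 - norm (s *\<^sub>R (inverse s *\<^sub>R x - z)) \<le> s * c"
        using s by (simp add: right_diff_distrib mult.assoc[symmetric])
      moreover have "s *\<^sub>R (inverse s *\<^sub>R x - z) = w" using s p(1) s_def by (simp add: algebra_simps)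
      ultimately have "a0 - norm w \<le> s * c" by metis
      thus ?thesis using p(2) s_def by simp
    qed
  next
    show "(y, norm y) \<in> M'" using sub yM by blast
  qed
  thus ?thesis using sub zin znot by blast
qed

lemma hahn_banach_point:
  fixes y :: "'b::real_normed_vector"
  assumes "y \<noteq> 0"
  shows "\<exists>f. (\<forall>u v. f (u + v) = f u + f v) \<and> (\<forall>r u. f (r *\<^sub>R u) = r * f u)
           \<and> (\<forall>x. \<bar>f x\<bar> \<le> norm x) \<and> f y = norm y"
proof -
  define A where "A = {G. LG y G}"
  define G0 where "G0 = {(t *\<^sub>R y, t * norm y) | t. True}"
  have G0: "LG y G0"
    unfolding LG_def G0_def
  proof (intro conjI ballI allI impI)
    fix p q assume "p \<in> {(t *\<^sub>R y, t * norm y) |t. True}" "q \<in> {(t *\<^sub>R y, t * norm y) |t. True}"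
    then obtain t t' where "p = (t *\<^sub>R y, t * norm y)" "q = (t' *\<^sub>R y, t' * norm y)" by blast
    hence "p + q = ((t + t') *\<^sub>R y, (t + t') * norm y)" by (simp add: algebra_simps)
    thus "p + q \<in> {(t *\<^sub>R y, t * norm y) |t. True}" by blast
  next
    fix p r assume "p \<in> {(t *\<^sub>R y, t * norm y) |t. True}"
    then obtain t where "p = (t *\<^sub>R y, t * norm y)" by blast
    hence "r *\<^sub>R p = ((r * t) *\<^sub>R y, (r * t) * norm y)" by simp
    thus "r *\<^sub>R p \<in> {(t *\<^sub>R y, t * norm y) |t. True}" by blast
  next
    fix x a b assume "(x, a) \<in> {(t *\<^sub>R y, t * norm y) |t. True}" "(x, b) \<in> {(t *\<^sub>R y, t * norm y) |t. True}"
    then obtain t t' where "x = t *\<^sub>R y" "a = t * norm y" "x = t' *\<^sub>R y" "b = t' * norm y" by blast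
    thus "a = b" using assms by (metis scaleR_cancel_right)
  next
    fix x a assume "(x, a) \<in> {(t *\<^sub>R y, t * norm y) |t. True}"
    then obtain t where "x = t *\<^sub>R y" "a = t * norm y" by blast
    thus "a \<le> norm x" by (simp add: mult_right_mono)
  next
    show "(y, norm y) \<in> {(t *\<^sub>R y, t * norm y) |t. True}" by (rule CollectI, rule exI[of _ 1]) simp
  qed
  have "\<forall>C\<in>chains A. \<exists>U\<in>A. \<forall>X\<in>C. X \<subseteq> U"
  proof
    fix C assume C: "C \<in> chains A"
    show "\<exists>U\<in>A. \<forall>X\<in>C. X \<subseteq> U"
    proof (cases "C = {}")
      case True thus ?thesis using G0 A_def by blast
    next
      case False
      have CA: "\<And>G. G \<in> C \<Longrightarrow> LG y G" using chainsD2[OF C] A_def by blast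
      have two: "\<exists>G\<in>C. p \<in> G \<and> q \<in> G" if "p \<in> \<Union>C" "q \<in> \<Union>C" for p q
        using that chainsD[OF C] by blast
      have "LG y (\<Union>C)"
        unfolding LG_def
      proof (intro conjI ballI allI impI)
        fix p q assume "p \<in> \<Union>C" "q \<in> \<Union>C"
        then obtain G where "G \<in> C" "p \<in> G" "q \<in> G" using two by blast
        thus "p + q \<in> \<Union>C" using CA[of G] unfolding LG_def by blast
      next
        fix p r assume "p \<in> \<Union>C"
        then obtain G where "G \<in> C" "p \<in> G" by blast
        thus "r *\<^sub>R p \<in> \<Union>C" using CA[of G] unfolding LG_def by blast
      next
        fix x a b assume "(x,a) \<in> \<Union>C" "(x,b) \<in> \<Union>C"
        then obtain G where "G \<in> C" "(x,a) \<in> G" "(x,b) \<in> G" using two by blast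
        thus "a = b" using CA[of G] unfolding LG_def by blast
      next
        fix x a assume "(x,a) \<in> \<Union>C"
        then obtain G where "G \<in> C" "(x,a) \<in> G" by blast
        thus "a \<le> norm x" using CA[of G] unfolding LG_def by blast
      next
        obtain G where "G \<in> C" using False by blast
        thus "(y, norm y) \<in> \<Union>C" using CA[of G] unfolding LG_def by blast
      qed
      thus ?thesis using A_def by blast
    qed
  qed
  then obtain M where MA: "M \<in> A" and max: "\<forall>X\<in>A. M \<subseteq> X \<longrightarrow> X = M"
    using Zorn_Lemma2 by blast
  have LM: "LG y M" using MA A_def by blast
  have dom: "\<forall>x. \<exists>a. (x,a) \<in> M"
  proof (rule ccontr)
    assume "\<not> ?thesis"
    then obtain z where "z \<notin> fst ` M" by force
    from LG_extend[OF LM this] obtain M' where "LG y M'" "M \<subseteq> M'" "M' \<noteq> M" by blast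
    thus False using max A_def by blast
  qed
  have add: "\<And>p q. p\<in>M \<Longrightarrow> q\<in>M \<Longrightarrow> p + q \<in> M" and sc: "\<And>p r. p\<in>M \<Longrightarrow> r *\<^sub>R p \<in> M"
    and funq: "\<And>x a b. (x,a)\<in>M \<Longrightarrow> (x,b)\<in>M \<Longrightarrow> a = b"
    and bd: "\<And>x a. (x,a)\<in>M \<Longrightarrow> a \<le> norm x" and yM: "(y, norm y) \<in> M"
    using LM unfolding LG_def by blast+
  define f where "f x = (THE a. (x,a) \<in> M)" for x
  have fM: "(x, f x) \<in> M" for x
    unfolding f_def by (rule theI') (use dom funq in blast)
  have fI: "f x = a" if "(x,a)\<in>M" for x a using funq[OF that fM] by simp
  show ?thesis
  proof (intro exI conjI allI)
    fix u v show "f (u + v) = f u + f v" using add[OF fM[of u] fM[of v]] fI by simp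
  next
    fix r u show "f (r *\<^sub>R u) = r * f u" using sc[OF fM[of u], of r] fI by simp
  next
    fix x
    have "f (-x) = - f x" using sc[OF fM[of x], of "-1"] fI by simp
    moreover have "f (-x) \<le> norm (-x)" using bd[OF fM] .
    moreover have "f x \<le> norm x" using bd[OF fM] .
    ultimately show "\<bar>f x\<bar> \<le> norm x" by simp
  next
    show "f y = norm y" using fI[OF yM] .
  qed
qed


lemma cont_coord_comp:
  fixes f :: "'b::real_normed_vector \<Rightarrow> 'c::real_normed_vector"
  assumes "bounded_linear f"
  shows "continuous_on UNIV (\<lambda>x::nat \<Rightarrow> 'b. f (x i))"
proof -
  have "continuous_on UNIV f" using assms linear_continuous_on by blast
  hence "continuous_on UNIV (f \<circ> (\<lambda>x::nat \<Rightarrow> 'b. x i))"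
    by (intro continuous_on_compose continuous_on_product_coordinates)
       (auto intro: continuous_on_subset)
  thus ?thesis by (simp add: o_def)
qed

lemma diff_of_add:
  fixes g :: "'x::ab_group_add \<Rightarrow> 'c::ab_group_add"
  assumes "\<And>u v. g (u + v) = g u + g v"
  shows "g (u - v) = g u - (g v :: 'c::ab_group_add)"
proof -
  have "g u = g (u - v) + g v" using assms[of "u - v" v] by simp
  thus ?thesis by (simp add: algebra_simps)
qed

lemma real_sep:
  fixes y :: "'b::real_normed_vector"
  assumes "y \<noteq> 0"
  shows "\<exists>f. (\<forall>u v. f (u + v) = f u + f v) \<and> (\<forall>r u. f (r *\<^sub>R u) = r * f u)
           \<and> bounded_linear f \<and> f y \<noteq> 0"
proof -
  obtain f where f: "\<forall>u v. f (u + v) = f u + f v" "\<forall>r u. f (r *\<^sub>R u) = r * f u"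
      "\<forall>x. \<bar>f x\<bar> \<le> norm x" "f y = norm y"
    using hahn_banach_point[OF assms] by blast
  have "bounded_linear f"
    by (rule bounded_linear_intro[where K=1]) (use f in auto)
  moreover have "f y \<noteq> 0" using f(4) assms by simp
  ultimately show ?thesis using f by blast
qed

lemma hom_poly_pow:
  fixes f :: "'b::real_normed_vector \<Rightarrow> real"
  assumes add: "\<And>u v. f (u + v) = f u + f v" and sc: "\<And>r u. f (r *\<^sub>R u) = r * f u"
    and bl: "bounded_linear f"
  shows "hom_poly scaleR (*) k (\<lambda>v. f v ^ k)"
  unfolding hom_poly_def
proof (intro exI conjI allI)
  define A where "A = (\<lambda>x::nat \<Rightarrow> 'b. \<Prod>i<k. f (x i))"
  show "f x ^ k = A (\<lambda>_. x)" for x by (simp add: A_def)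
  show "continuous_on UNIV A" unfolding A_def
    by (intro continuous_on_prod cont_coord_comp[OF bl])
  have upd: "A (x(i := w)) = f w * (\<Prod>j\<in>{..<k} - {i}. f (x j))" if "i < k" for x i w
  proof -
    have "A (x(i := w)) = f w * (\<Prod>j\<in>{..<k} - {i}. f ((x(i := w)) j))"
      unfolding A_def using that by (subst prod.remove[of _ i]) auto
    also have "(\<Prod>j\<in>{..<k} - {i}. f ((x(i := w)) j)) = (\<Prod>j\<in>{..<k} - {i}. f (x j))"
      by (rule prod.cong) auto
    finally show ?thesis .
  qed
  show "multilinear_map scaleR (*) k A"
    unfolding multilinear_map_def
  proof (intro conjI allI impI)
    fix x y :: "nat \<Rightarrow> 'b" assume "\<forall>i<k. x i = y i"
    thus "A x = A y" unfolding A_def by (intro prod.cong) auto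
  next
    fix i x y z assume i: "i < k"
    show "A (x(i := y + z)) = A (x(i := y)) + A (x(i := z))"
      using upd[OF i] add by (simp add: algebra_simps)
  next
    fix i x c y assume i: "i < k"
    show "A (x(i := c *\<^sub>R y)) = c * A (x(i := y))"
      using upd[OF i] sc by (simp add: algebra_simps)
  qed
qed

lemma real_inj:
  assumes "odd (k * n)"
  shows "inj_on (Delta {q :: 'b::banach \<Rightarrow> real. hom_poly scaleR (*) k q} n) (S :: ('a \<Rightarrow> 'b) set)"
proof (rule inj_onI)
  fix P1 P2 assume "P1 \<in> S" "P2 \<in> S" and eq: "Delta {q :: 'b \<Rightarrow> real. hom_poly scaleR (*) k q} n P1
     = Delta {q. hom_poly scaleR (*) k q} n P2"
  show "P1 = P2"
  proof (rule ext, rule ccontr)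
    fix x assume ne: "P1 x \<noteq> P2 x"
    then obtain f where f: "\<forall>u v. f (u + v) = f u + f v" "\<forall>r u. f (r *\<^sub>R u) = r * f u"
      "bounded_linear f" "f (P1 x - P2 x) \<noteq> 0"
      using real_sep[of "P1 x - P2 x"] by auto
    have q: "(\<lambda>v. f v ^ k) \<in> {q :: 'b \<Rightarrow> real. hom_poly scaleR (*) k q}"
      using hom_poly_pow[of f k] f by auto
    have "Delta {q :: 'b \<Rightarrow> real. hom_poly scaleR (*) k q} n P1 (\<lambda>v. f v ^ k) x
        = Delta {q :: 'b \<Rightarrow> real. hom_poly scaleR (*) k q} n P2 (\<lambda>v. f v ^ k) x"
      using eq by simp
    hence "f (P1 x) ^ (k * n) = f (P2 x) ^ (k * n)"
      using q unfolding Delta_def by (simp add: power_mult)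
    hence "root (k * n) (f (P1 x) ^ (k * n)) = root (k * n) (f (P2 x) ^ (k * n))" by simp
    hence "f (P1 x) = f (P2 x)" using odd_real_root_power_cancel[OF assms] by simp
    moreover have "f (P1 x - P2 x) = f (P1 x) - f (P2 x)" by (rule diff_of_add) (use f in auto)
    ultimately show False using f(4) by simp
  qed
qed

lemma complex_sep:
  fixes y :: "'b::real_normed_vector" and sc :: "complex \<Rightarrow> 'b \<Rightarrow> 'b"
  assumes cs: "complex_structure sc" and y: "y \<noteq> 0"
  shows "\<exists>g. (\<forall>u v. g (u + v) = g u + g v) \<and> (\<forall>c u. g (sc c u) = c * g u)
           \<and> bounded_linear g \<and> g y \<noteq> 0"
proof -
  have scr: "\<And>r x. sc (complex_of_real r) x = r *\<^sub>R x"
    and scm: "\<And>a b x. sc (a * b) x = sc a (sc b x)"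
    and sca: "\<And>a x y. sc a (x + y) = sc a x + sc a y"
    and scs: "\<And>a b x. sc (a + b) x = sc a x + sc b x"
    and scn: "\<And>a x. norm (sc a x) = cmod a * norm x"
    using cs unfolding complex_structure_def by blast+
  obtain f where f: "\<And>u v. f (u + v) = f u + f v" "\<And>r u. f (r *\<^sub>R u) = r * f u"
      "\<And>x. \<bar>f x\<bar> \<le> norm x" "f y = norm y"
    using hahn_banach_point[OF y] by blast
  define I where "I = sc \<i>"
  have Iadd: "I (u + v) = I u + I v" for u v unfolding I_def by (rule sca)
  have II: "I (I v) = - v" for v
  proof -
    have "I (I v) = sc (\<i> * \<i>) v" unfolding I_def by (rule scm[symmetric])
    also have "\<i> * \<i> = complex_of_real (-1)" by simp
    also have "sc (complex_of_real (-1)) v = - v" using scr[of "-1" v] by simp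
    finally show ?thesis .
  qed
  have Isc: "I (r *\<^sub>R v) = r *\<^sub>R I v" for r v
  proof -
    have "I (r *\<^sub>R v) = sc (\<i> * complex_of_real r) v" unfolding I_def by (simp add: scm scr[symmetric])
    also have "\<i> * complex_of_real r = complex_of_real r * \<i>" by simp
    finally show ?thesis unfolding I_def by (simp add: scm scr)
  qed
  have In: "norm (I v) = norm v" for v unfolding I_def by (simp add: scn)
  have fneg: "f (- v) = - f v" for v using f(2)[of "-1" v] by simp
  define g where "g v = complex_of_real (f v) - \<i> * complex_of_real (f (I v))" for v
  have gadd: "g (u + v) = g u + g v" for u v unfolding g_def by (simp add: f(1) Iadd algebra_simps)
  have gsc: "g (r *\<^sub>R v) = complex_of_real r * g v" for r v
    unfolding g_def by (simp add: f(2) Isc algebra_simps)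
  have gI: "g (I v) = \<i> * g v" for v
    unfolding g_def by (simp add: II fneg algebra_simps)
  have gc: "g (sc c u) = c * g u" for c u
  proof -
    have c: "c = complex_of_real (Re c) + \<i> * complex_of_real (Im c)" by (simp add: complex_eq_iff)
    have "sc c u = Re c *\<^sub>R u + I (Im c *\<^sub>R u)"
      by (subst c) (simp add: scs scm scr I_def)
    hence "g (sc c u) = complex_of_real (Re c) * g u + \<i> * (complex_of_real (Im c) * g u)"
      by (simp add: gadd gsc gI)
    also have "\<dots> = c * g u" by (subst (3) c) (simp add: algebra_simps)
    finally show ?thesis .
  qed
  have "bounded_linear g"
  proof (rule bounded_linear_intro[where K=2])
    show "g (u + v) = g u + g v" for u v by (rule gadd)
    show "g (r *\<^sub>R v) = r *\<^sub>R g v" for r v by (simp add: gsc scaleR_conv_of_real)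
    show "norm (g v) \<le> norm v * 2" for v
    proof -
      have "norm (g v) \<le> norm (complex_of_real (f v)) + norm (\<i> * complex_of_real (f (I v)))"
        unfolding g_def by (rule norm_triangle_ineq4)
      also have "\<dots> = \<bar>f v\<bar> + \<bar>f (I v)\<bar>" by (simp add: norm_mult)
      also have "\<dots> \<le> norm v + norm (I v)" using f(3) by (intro add_mono) auto
      finally show ?thesis using In by simp
    qed
  qed
  moreover have "Re (g y) = norm y" unfolding g_def using f(4) by simp
  hence "g y \<noteq> 0" using y by auto
  ultimately show ?thesis using gadd gc by blast
qed

lemma complex_inj:
  fixes scE :: "complex \<Rightarrow> 'a \<Rightarrow> 'a" and scF :: "complex \<Rightarrow> 'b::banach \<Rightarrow> 'b"
  assumes "complex_structure scF"
  shows "inj_on (Delta {q :: 'b \<Rightarrow> complex. hom_poly scF (*) 1 q} 1) (S :: ('a \<Rightarrow> 'b) set)"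
proof (rule inj_onI)
  fix P1 P2 assume "P1 \<in> S" "P2 \<in> S" and eq: "Delta {q :: 'b \<Rightarrow> complex. hom_poly scF (*) 1 q} 1 P1
     = Delta {q. hom_poly scF (*) 1 q} 1 P2"
  show "P1 = P2"
  proof (rule ext, rule ccontr)
    fix x assume ne: "P1 x \<noteq> P2 x"
    then obtain g where g: "\<forall>u v. g (u + v) = g u + g v" "\<forall>c u. g (scF c u) = c * g u"
      "bounded_linear g" "g (P1 x - P2 x) \<noteq> 0"
      using complex_sep[OF assms, of "P1 x - P2 x"] by auto
    have "hom_poly scF (*) 1 g"
      unfolding hom_poly_def
    proof (intro exI conjI allI)
      define A where "A = (\<lambda>x::nat \<Rightarrow> 'b. g (x 0))"
      show "g x = A (\<lambda>_. x)" for x by (simp add: A_def)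
      show "continuous_on UNIV A" unfolding A_def by (rule cont_coord_comp[OF g(3)])
      show "multilinear_map scF (*) 1 A"
        unfolding multilinear_map_def A_def using g(1,2) by auto
    qed
    hence q: "g \<in> {q :: 'b \<Rightarrow> complex. hom_poly scF (*) 1 q}" by simp
    have "Delta {q :: 'b \<Rightarrow> complex. hom_poly scF (*) 1 q} 1 P1 g x
        = Delta {q :: 'b \<Rightarrow> complex. hom_poly scF (*) 1 q} 1 P2 g x"
      using eq by simp
    hence "g (P1 x) = g (P2 x)" using q unfolding Delta_def by simp
    moreover have "g (P1 x - P2 x) = g (P1 x) - g (P2 x)" by (rule diff_of_add) (use g in auto)
    ultimately show False using g(4) by simp
  qed
qed

theorem mainTheorem4:
  fixes E_ty :: "'a::banach itself" and F_ty :: "'b::banach itself"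
  shows
    "(\<forall>m n k::nat. (k = 1 \<and> n = 1) \<or> odd (k * n) \<longrightarrow>
        inj_on (Delta {q :: 'b \<Rightarrow> real. hom_poly scaleR (*) k q} n)
               {P :: 'a \<Rightarrow> 'b. hom_poly scaleR scaleR m P})
   \<and>
     (\<forall>(scE :: complex \<Rightarrow> 'a \<Rightarrow> 'a) (scF :: complex \<Rightarrow> 'b \<Rightarrow> 'b) (m::nat) (n::nat) (k::nat).
        complex_structure scE \<and> complex_structure scF \<and> k = 1 \<and> n = 1 \<longrightarrow>
        inj_on (Delta {q :: 'b \<Rightarrow> complex. hom_poly scF (*) k q} n)
               {P :: 'a \<Rightarrow> 'b. hom_poly scE scF m P})"
proof (intro conjI allI impI)
  fix m n k :: nat assume "(k = 1 \<and> n = 1) \<or> odd (k * n)"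
  hence "odd (k * n)" by auto
  thus "inj_on (Delta {q :: 'b \<Rightarrow> real. hom_poly scaleR (*) k q} n)
               {P :: 'a \<Rightarrow> 'b. hom_poly scaleR scaleR m P}" by (rule real_inj)
next
  fix scE :: "complex \<Rightarrow> 'a \<Rightarrow> 'a" and scF :: "complex \<Rightarrow> 'b \<Rightarrow> 'b" and m n k :: nat
  assume a: "complex_structure scE \<and> complex_structure scF \<and> k = 1 \<and> n = 1"
  thus "inj_on (Delta {q :: 'b \<Rightarrow> complex. hom_poly scF (*) k q} n)
               {P :: 'a \<Rightarrow> 'b. hom_poly scE scF m P}"
    using complex_inj[of scF] by auto
qed

end
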